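(* For each $k=1,\dots,n-3$ there exists a unique polynomial $\tilde F_k\in\mathbb C[x_0,\dots,x_n,y_1,\dots,y_m]$ such that (1) $\tilde F_k$ is quasi-homogeneous of multi-degree $(b_{0k},\dots,b_{mk})$, where $x_j$ has multi-degree $(w_j,a_{1j},\dots,a_{mj})$ and $y_i$ has multi-degree the $i$-th standard unit vector $(0,\dots,1,\dots,0)$ of $\mathbb Z^{m+1}$ (indices $0,\dots,m$); and (2) $\tilde F_k(x_0,\dots,x_n,1,\dots,1)=F_k(x_0,\dots,x_n)$.
   Context: Let $w_0,\dots,w_n$ be positive integers ($\gcd=1$), $X=V(F_1,\dots,F_{n-3})\subset\mathbb P(\vec w)=[(\mathbb C^{n+1}\setminus0)/\mathbb C^*]$ ($x_i$ of weight $w_i$) a smooth complete intersection, $F_j$ general quasi-homogeneous of degree $b_j$ with $\sum b_j=\sum w_i$, $X$ not in any linear subspace. For $\alpha\in\mathbb Q\cap[0,1)$, $C_\alpha=\{i:\alpha w_i\in\mathbb Z\}$, $\mathbb P_\alpha=\{x_i=0,i\notin C_\alpha\}$, $X_\alpha=X\cap\mathbb P_\alpha$, age $\iota_\alpha=\sum_j\lfloor\alpha b_j\rfloor-\sum_i\lfloor\alpha w_i\rfloor$; for $\dim X_\alpha=0$, $\Lambda\subset C_\alpha$: $U_\Lambda=\{x_k=0\ (k\in\Lambda),x_k\ne0\ (k\in C_\alpha\setminus\Lambda)\}\subset\mathbb P_\alpha$, $\overline{U_\Lambda}=\{x_k=0,k\in\Lambda\}$. Let $\phi_1,\dots,\phi_m$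 be (i) $\mathbf 1_{X_\alpha}$ for $\alpha\ne0$, $\dim X_\alpha=1$, $\iota_\alpha=1$; (ii) for $\alpha\ne0$, $\dim X_\alpha=0$, $\iota_\alpha=1$, the classes $\mathbf 1_{\overline{U_\Lambda}\cap X_\alpha}$ for $\Lambda$ with $U_\Lambda\cap X_\alpha\ne\emptyset$; $\alpha_i$ is the sector of $\phi_i$. If $\phi_i$ is of type (i): $a_{ij}=\lfloor\alpha_iw_j\rfloor$ ($0\le j\le n$), $b_{ik}=\lfloor\alpha_ib_k\rfloor$ ($1\le k\le n-3$). If $\phi_i=\mathbf 1_{\overline{U_\Lambda}\cap X_{\alpha_i}}$ is of type (ii): $a_{ij}=\lfloor\alpha_iw_j\rfloor-\delta_\Lambda(j)$, $b_{ik}=\lfloor\alpha_ib_k\rfloor-\delta_\Gamma(k)$, with $\Gamma=\{k:\alpha_ib_k\in\mathbb Z,F_k\text{ identically zero on }U_\Lambda\}$ and $\delta$ indicator functions. Also $b_{0k}=b_k$. *)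

theory Defs
  imports Complex_Main "HOL-Library.Poly_Mapping"
begin

type_synonym 'v cpoly = "('v \<Rightarrow>\<^sub>0 nat) \<Rightarrow>\<^sub>0 complex"

definition pvars :: "'v cpoly \<Rightarrow> 'v set" where
  "pvars p = {v. \<exists>e\<in>Poly_Mapping.keys p. v \<in> Poly_Mapping.keys e}"

definition peval :: "'v cpoly \<Rightarrow> ('v \<Rightarrow> complex) \<Rightarrow> complex" where
  "peval p x = (\<Sum>e\<in>Poly_Mapping.keys p. poly_mapping.lookup p e * (\<Prod>j\<in>Poly_Mapping.keys e. x j ^ poly_mapping.lookup e j))"

definition pderiv_eval :: "'v cpoly \<Rightarrow> 'v \<Rightarrow> ('v \<Rightarrow> complex) \<Rightarrow> complex" where
  "pderiv_eval p i x = (\<Sum>e\<in>Poly_Mapping.keys p. poly_mapping.lookup p e * of_nat (poly_mapping.lookup e i) *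
       (\<Prod>j\<in>Poly_Mapping.keys e. x j ^ (if j = i then poly_mapping.lookup e j - 1 else poly_mapping.lookup e j)))"

definition wdeg :: "(nat \<Rightarrow> nat) \<Rightarrow> (nat \<Rightarrow>\<^sub>0 nat) \<Rightarrow> nat" where
  "wdeg w e = (\<Sum>j\<in>Poly_Mapping.keys e. w j * poly_mapping.lookup e j)"

definition quasi_hom :: "nat \<Rightarrow> (nat \<Rightarrow> nat) \<Rightarrow> nat \<Rightarrow> nat cpoly \<Rightarrow> bool" where
  "quasi_hom n w d p \<longleftrightarrow> pvars p \<subseteq> {0..n} \<and> (\<forall>e\<in>Poly_Mapping.keys p. wdeg w e = d)"

text \<open>Points of C^(n+1), represented as maps nat \<Rightarrow> complex vanishing beyond n.\<close>
definition cspace :: "nat \<Rightarrow> (nat \<Rightarrow> complex) set" where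
  "cspace n = {x. \<forall>j>n. x j = 0}"

text \<open>Affine cone over X = V(F_1,..,F_{n-3}) with the origin removed.\<close>
definition Xcone :: "nat \<Rightarrow> (nat \<Rightarrow> nat cpoly) \<Rightarrow> (nat \<Rightarrow> complex) set" where
  "Xcone n F = {x \<in> cspace n. (\<exists>j. x j \<noteq> 0) \<and> (\<forall>k\<in>{1..n-3}. peval (F k) x = 0)}"

text \<open>Smoothness of the complete intersection stack X: at every point of the
  punctured affine cone the gradients of F_1..F_{n-3} are linearly independent.\<close>
definition quasi_smooth :: "nat \<Rightarrow> (nat \<Rightarrow> nat cpoly) \<Rightarrow> bool" where
  "quasi_smooth n F \<longleftrightarrow> (\<forall>x\<in>Xcone n F. \<forall>c::nat \<Rightarrow> complex.
      (\<forall>i\<le>n. (\<Sum>k\<in>{1..n-3}. c k * pderiv_eval (F k) i x) = 0) \<longrightarrow> (\<forall>k\<in>{1..n-3}. c k = 0))"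

definition zclosed :: "nat \<Rightarrow> (nat \<Rightarrow> complex) set \<Rightarrow> bool" where
  "zclosed n Z \<longleftrightarrow> (\<exists>P::nat cpoly set. (\<forall>p\<in>P. pvars p \<subseteq> {0..n}) \<and>
      Z = {x \<in> cspace n. \<forall>p\<in>P. peval p x = 0})"

definition zirred :: "nat \<Rightarrow> (nat \<Rightarrow> complex) set \<Rightarrow> bool" where
  "zirred n Z \<longleftrightarrow> zclosed n Z \<and> Z \<noteq> {} \<and>
     (\<forall>A B. zclosed n A \<and> zclosed n B \<and> Z = A \<union> B \<longrightarrow> Z = A \<or> Z = B)"

definition has_chain :: "nat \<Rightarrow> (nat \<Rightarrow> complex) set \<Rightarrow> nat \<Rightarrow> bool" where
  "has_chain n A d \<longleftrightarrow> (\<exists>Z::nat \<Rightarrow> (nat \<Rightarrow> complex) set.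
      (\<forall>i\<le>d. zirred n (Z i) \<and> Z i \<subseteq> A) \<and> (\<forall>i<d. Z i \<subset> Z (Suc i)))"

definition aff_dim_eq :: "nat \<Rightarrow> (nat \<Rightarrow> complex) set \<Rightarrow> nat \<Rightarrow> bool" where
  "aff_dim_eq n A d \<longleftrightarrow> has_chain n A d \<and> \<not> has_chain n A (Suc d)"

definition Csec :: "nat \<Rightarrow> (nat \<Rightarrow> nat) \<Rightarrow> rat \<Rightarrow> nat set" where
  "Csec n w \<alpha> = {i\<in>{0..n}. \<alpha> * of_nat (w i) \<in> \<int>}"

text \<open>Punctured affine cone over X_alpha = X \<inter> P_alpha.\<close>
definition Xsec :: "nat \<Rightarrow> (nat \<Rightarrow> nat) \<Rightarrow> (nat \<Rightarrow> nat cpoly) \<Rightarrow> rat \<Rightarrow> (nat \<Rightarrow> complex) set" where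
  "Xsec n w F \<alpha> = {x \<in> Xcone n F. \<forall>i\<in>{0..n} - Csec n w \<alpha>. x i = 0}"

text \<open>dim X_alpha = d (as a projective variety / stack): the affine cone
  X_alpha \<union> {0} has Krull dimension d+1.\<close>
definition dimX_eq :: "nat \<Rightarrow> (nat \<Rightarrow> nat) \<Rightarrow> (nat \<Rightarrow> nat cpoly) \<Rightarrow> rat \<Rightarrow> nat \<Rightarrow> bool" where
  "dimX_eq n w F \<alpha> d \<longleftrightarrow> aff_dim_eq n (insert (\<lambda>_. 0) (Xsec n w F \<alpha>)) (Suc d)"

definition age :: "nat \<Rightarrow> (nat \<Rightarrow> nat) \<Rightarrow> (nat \<Rightarrow> nat) \<Rightarrow> rat \<Rightarrow> int" where
  "age n w b \<alpha> = (\<Sum>j\<in>{1..n-3}. \<lfloor>\<alpha> * of_nat (b j)\<rfloor>) - (\<Sum>i\<in>{0..n}. \<lfloor>\<alpha> * of_nat (w i)\<rfloor>)"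

definition Uset :: "nat \<Rightarrow> (nat \<Rightarrow> nat) \<Rightarrow> rat \<Rightarrow> nat set \<Rightarrow> (nat \<Rightarrow> complex) set" where
  "Uset n w \<alpha> \<Lambda> = {x \<in> cspace n. (\<exists>j. x j \<noteq> 0) \<and> (\<forall>i\<in>{0..n} - Csec n w \<alpha>. x i = 0) \<and>
      (\<forall>k\<in>\<Lambda>. x k = 0) \<and> (\<forall>k\<in>Csec n w \<alpha> - \<Lambda>. x k \<noteq> 0)}"

text \<open>Labels of the classes phi_i: a pair (alpha, Lambda). Type (i) classes
  1_{X_alpha} are labelled (alpha, {}); type (ii) classes 1_{closure U_Lambda \<inter> X_alpha}
  are labelled (alpha, Lambda).\<close>
definition type1 :: "nat \<Rightarrow> (nat \<Rightarrow> nat) \<Rightarrow> (nat \<Rightarrow> nat) \<Rightarrow> (nat \<Rightarrow> nat cpoly) \<Rightarrow> rat \<Rightarrow> bool" where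
  "type1 n w b F \<alpha> \<longleftrightarrow> 0 < \<alpha> \<and> \<alpha> < 1 \<and> dimX_eq n w F \<alpha> 1 \<and> age n w b \<alpha> = 1"

definition type2 :: "nat \<Rightarrow> (nat \<Rightarrow> nat) \<Rightarrow> (nat \<Rightarrow> nat) \<Rightarrow> (nat \<Rightarrow> nat cpoly) \<Rightarrow> rat \<Rightarrow> bool" where
  "type2 n w b F \<alpha> \<longleftrightarrow> 0 < \<alpha> \<and> \<alpha> < 1 \<and> dimX_eq n w F \<alpha> 0 \<and> age n w b \<alpha> = 1"

definition Phi :: "nat \<Rightarrow> (nat \<Rightarrow> nat) \<Rightarrow> (nat \<Rightarrow> nat) \<Rightarrow> (nat \<Rightarrow> nat cpoly) \<Rightarrow> (rat \<times> nat set) set" where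
  "Phi n w b F = {(\<alpha>, \<Lambda>). (type1 n w b F \<alpha> \<and> \<Lambda> = {}) \<or>
      (type2 n w b F \<alpha> \<and> \<Lambda> \<subseteq> Csec n w \<alpha> \<and> Uset n w \<alpha> \<Lambda> \<inter> Xsec n w F \<alpha> \<noteq> {})}"

definition Gam :: "nat \<Rightarrow> (nat \<Rightarrow> nat) \<Rightarrow> (nat \<Rightarrow> nat) \<Rightarrow> (nat \<Rightarrow> nat cpoly) \<Rightarrow> rat \<Rightarrow> nat set \<Rightarrow> nat set" where
  "Gam n w b F \<alpha> \<Lambda> = {k\<in>{1..n-3}. \<alpha> * of_nat (b k) \<in> \<int> \<and> (\<forall>x\<in>Uset n w \<alpha> \<Lambda>. peval (F k) x = 0)}"

definition acoef :: "nat \<Rightarrow> (nat \<Rightarrow> nat) \<Rightarrow> (nat \<Rightarrow> nat) \<Rightarrow> (nat \<Rightarrow> nat cpoly) \<Rightarrow> rat \<times> nat set \<Rightarrow> nat \<Rightarrow> int" where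
  "acoef n w b F \<phi> j = (case \<phi> of (\<alpha>, \<Lambda>) \<Rightarrow>
     if type1 n w b F \<alpha> then \<lfloor>\<alpha> * of_nat (w j)\<rfloor>
     else \<lfloor>\<alpha> * of_nat (w j)\<rfloor> - (if j \<in> \<Lambda> then 1 else 0))"

definition bcoef :: "nat \<Rightarrow> (nat \<Rightarrow> nat) \<Rightarrow> (nat \<Rightarrow> nat) \<Rightarrow> (nat \<Rightarrow> nat cpoly) \<Rightarrow> rat \<times> nat set \<Rightarrow> nat \<Rightarrow> int" where
  "bcoef n w b F \<phi> k = (case \<phi> of (\<alpha>, \<Lambda>) \<Rightarrow>
     if type1 n w b F \<alpha> then \<lfloor>\<alpha> * of_nat (b k)\<rfloor>
     else \<lfloor>\<alpha> * of_nat (b k)\<rfloor> - (if k \<in> Gam n w b F \<alpha> \<Lambda> then 1 else 0))"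

text \<open>Variables: Inl j is x_j, Inr phi is y_phi.\<close>
type_synonym xyvar = "nat + (rat \<times> nat set)"

definition deg0 :: "(nat \<Rightarrow> nat) \<Rightarrow> (xyvar \<Rightarrow>\<^sub>0 nat) \<Rightarrow> int" where
  "deg0 w e = (\<Sum>v\<in>Poly_Mapping.keys e. (case v of Inl j \<Rightarrow> int (w j) | Inr _ \<Rightarrow> 0) * int (poly_mapping.lookup e v))"

definition degphi :: "(nat \<Rightarrow> int) \<Rightarrow> rat \<times> nat set \<Rightarrow> (xyvar \<Rightarrow>\<^sub>0 nat) \<Rightarrow> int" where
  "degphi a \<phi> e = (\<Sum>v\<in>Poly_Mapping.keys e. (case v of Inl j \<Rightarrow> a j | Inr \<psi> \<Rightarrow> (if \<psi> = \<phi> then 1 else 0)) * int (poly_mapping.lookup e v))"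

definition xpart :: "(xyvar \<Rightarrow>\<^sub>0 nat) \<Rightarrow> (nat \<Rightarrow>\<^sub>0 nat)" where
  "xpart e = Abs_poly_mapping (\<lambda>j. poly_mapping.lookup e (Inl j))"

definition subst_y1 :: "xyvar cpoly \<Rightarrow> nat cpoly" where
  "subst_y1 G = Abs_poly_mapping (\<lambda>f. \<Sum>e\<in>{e \<in> Poly_Mapping.keys G. xpart e = f}. poly_mapping.lookup G e)"

definition is_lift :: "nat \<Rightarrow> (nat \<Rightarrow> nat) \<Rightarrow> (nat \<Rightarrow> nat) \<Rightarrow> (nat \<Rightarrow> nat cpoly) \<Rightarrow> nat \<Rightarrow> xyvar cpoly \<Rightarrow> bool" where
  "is_lift n w b F k G \<longleftrightarrow>
     pvars G \<subseteq> Inl ` {0..n} \<union> Inr ` Phi n w b F \<and>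
     (\<forall>e\<in>Poly_Mapping.keys G. deg0 w e = int (b k) \<and>
        (\<forall>\<phi>\<in>Phi n w b F. degphi (acoef n w b F \<phi>) \<phi> e = bcoef n w b F \<phi> k)) \<and>
     subst_y1 G = F k"

end

theory Submission
  imports Defs "HOL-Computational_Algebra.Polynomial"
begin

lemma digits_inj:
  fixes d d' :: "nat \<Rightarrow> nat"
  shows "(\<forall>j<m. d j < N) \<Longrightarrow> (\<forall>j<m. d' j < N) \<Longrightarrow>
    (\<Sum>j<m. d j * N^j) = (\<Sum>j<m. d' j * N^j) \<Longrightarrow> j < m \<Longrightarrow> d j = d' j"
proof (induction m arbitrary: d d' j)
  case 0 then show ?case by simp
next
  case (Suc m)
  have e: "\<And>d::nat\<Rightarrow>nat. (\<Sum>j<Suc m. d j * N^j) = d 0 + N * (\<Sum>j<m. d (Suc j) * N^j)"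
    unfolding sum.lessThan_Suc_shift by (simp add: sum_distrib_left algebra_simps)
  have d0: "d 0 < N" "d' 0 < N" using Suc.prems by auto
  have eq: "d 0 + N * (\<Sum>j<m. d (Suc j) * N^j) = d' 0 + N * (\<Sum>j<m. d' (Suc j) * N^j)"
    using Suc.prems(3) e by metis
  have "(d 0 + N * (\<Sum>j<m. d (Suc j) * N^j)) mod N = d 0" using d0 by simp
  moreover have "(d' 0 + N * (\<Sum>j<m. d' (Suc j) * N^j)) mod N = d' 0" using d0 by simp
  ultimately have h0: "d 0 = d' 0" using eq by metis
  have "N > 0" using d0 by simp
  then have hs: "(\<Sum>j<m. d (Suc j) * N^j) = (\<Sum>j<m. d' (Suc j) * N^j)" using eq h0 by simp
  show ?case
  proof (cases j)
    case 0 then show ?thesis using h0 by simp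
  next
    case (Suc i)
    have "d (Suc i) = d' (Suc i)"
      apply (rule Suc.IH[of "\<lambda>j. d (Suc j)" "\<lambda>j. d' (Suc j)"])
      using Suc.prems hs \<open>j = Suc i\<close> by auto
    then show ?thesis using Suc by simp
  qed
qed

lemma torus:
  fixes P :: "nat cpoly" and T :: "nat set" and f :: "nat \<Rightarrow>\<^sub>0 nat"
  assumes T: "T \<subseteq> {0..n}" and f: "f \<in> Poly_Mapping.keys P" and fT: "Poly_Mapping.keys f \<subseteq> T"
    and van: "\<forall>x. (\<forall>j\<in>T. x j \<noteq> 0) \<and> (\<forall>j. j \<notin> T \<longrightarrow> x j = 0) \<longrightarrow> peval P x = 0"
  shows False
proof -
  define N where "N = Suc (\<Sum>e\<in>Poly_Mapping.keys P. \<Sum>j\<in>Poly_Mapping.keys e. poly_mapping.lookup e j)"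
  have Nb: "poly_mapping.lookup e j < N" if "e \<in> Poly_Mapping.keys P" for e j
  proof (cases "j \<in> Poly_Mapping.keys e")
    case True
    have "poly_mapping.lookup e j \<le> (\<Sum>j\<in>Poly_Mapping.keys e. poly_mapping.lookup e j)" using True by (intro member_le_sum) auto
    also have "\<dots> \<le> (\<Sum>e\<in>Poly_Mapping.keys P. \<Sum>j\<in>Poly_Mapping.keys e. poly_mapping.lookup e j)" using that by (intro member_le_sum) auto
    finally show ?thesis unfolding N_def by simp
  next
    case False then show ?thesis unfolding N_def by (simp add: in_keys_iff)
  qed
  define \<kappa> where "\<kappa> e = (\<Sum>j\<in>Poly_Mapping.keys e. poly_mapping.lookup e j * N^j)" for e :: "nat \<Rightarrow>\<^sub>0 nat"
  define S where "S = {e\<in>Poly_Mapping.keys P. Poly_Mapping.keys e \<subseteq> T}"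
  have kS: "\<kappa> e = (\<Sum>j<Suc n. poly_mapping.lookup e j * N^j)" if "e \<in> S" for e
    unfolding \<kappa>_def
    apply (rule sum.mono_neutral_left)
    using that T by (auto simp: S_def in_keys_iff)
  have kinj: "inj_on \<kappa> S"
  proof (rule inj_onI)
    fix e e' assume e: "e \<in> S" and e': "e' \<in> S" and eq: "\<kappa> e = \<kappa> e'"
    show "e = e'"
    proof (rule poly_mapping_eqI)
      fix j
      show "poly_mapping.lookup e j = poly_mapping.lookup e' j"
      proof (cases "j < Suc n")
        case True
        show ?thesis
          apply (rule digits_inj[of "Suc n" "poly_mapping.lookup e" N "poly_mapping.lookup e'"])
          using e e' Nb eq kS True by (auto simp: S_def)
      next
        case False
        then have "j \<notin> Poly_Mapping.keys e" "j \<notin> Poly_Mapping.keys e'" using e e' T by (auto simp: S_def)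
        then show ?thesis by (simp add: in_keys_iff)
      qed
    qed
  qed
  have Npos: "N > 0" unfolding N_def by simp
  have ev: "peval P (\<lambda>j. if j\<in>T then z^(N^j) else 0) = (\<Sum>e\<in>S. poly_mapping.lookup P e * z^(\<kappa> e))"
    if z: "z \<noteq> 0" for z :: complex
  proof -
    have pr: "(\<Prod>j\<in>Poly_Mapping.keys e. (if j\<in>T then z^(N^j) else 0) ^ poly_mapping.lookup e j) =
       (if e \<in> S then z^(\<kappa> e) else 0)" if "e \<in> Poly_Mapping.keys P" for e
    proof (cases "Poly_Mapping.keys e \<subseteq> T")
      case True
      have "(\<Prod>j\<in>Poly_Mapping.keys e. (if j\<in>T then z^(N^j) else 0) ^ poly_mapping.lookup e j) = (\<Prod>j\<in>Poly_Mapping.keys e. z ^ (poly_mapping.lookup e j * N^j))"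
        using True by (intro prod.cong) (auto simp: power_mult[symmetric] mult.commute)
      also have "\<dots> = z^(\<kappa> e)" unfolding \<kappa>_def by (simp add: power_sum)
      finally show ?thesis using True that by (simp add: S_def)
    next
      case False
      then obtain j where j: "j \<in> Poly_Mapping.keys e" "j \<notin> T" by auto
      have "(\<Prod>j\<in>Poly_Mapping.keys e. (if j\<in>T then z^(N^j) else 0) ^ poly_mapping.lookup e j) = 0"
        apply (rule prod_zero) using j by (auto simp: in_keys_iff intro!: bexI[of _ j])
      then show ?thesis using False by (simp add: S_def)
    qed
    have "peval P (\<lambda>j. if j\<in>T then z^(N^j) else 0) = (\<Sum>e\<in>Poly_Mapping.keys P. if e \<in> S then poly_mapping.lookup P e * z^(\<kappa> e) else 0)"
      unfolding peval_def by (intro sum.cong) (auto simp: pr)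
    also have "\<dots> = (\<Sum>e\<in>S. poly_mapping.lookup P e * z^(\<kappa> e))"
      by (rule sum.mono_neutral_cong_right) (auto simp: S_def)
    finally show ?thesis .
  qed
  define q where "q = (\<Sum>e\<in>S. monom (poly_mapping.lookup P e) (\<kappa> e))"
  have qz: "poly q z = 0" if "z \<noteq> 0" for z
  proof -
    have "poly q z = (\<Sum>e\<in>S. poly_mapping.lookup P e * z^(\<kappa> e))" unfolding q_def by (simp add: poly_sum poly_monom)
    also have "\<dots> = 0" using ev[OF that] van that Npos by (auto)
    finally show ?thesis .
  qed
  have "q = 0"
  proof (rule ccontr)
    assume "q \<noteq> 0"
    then have "finite {z. poly q z = 0}" by (rule poly_roots_finite)
    moreover have "UNIV - {0} \<subseteq> {z. poly q z = 0}" using qz by auto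
    ultimately have "finite (UNIV - {0::complex})" by (rule finite_subset[rotated])
    then show False by (simp add: infinite_UNIV_char_0)
  qed
  have fS: "f \<in> S" using f fT by (simp add: S_def)
  have "coeff q (\<kappa> f) = (\<Sum>e\<in>S. if \<kappa> e = \<kappa> f then poly_mapping.lookup P e else 0)"
    unfolding q_def by (simp add: coeff_sum)
  also have "\<dots> = (\<Sum>e\<in>S. if e = f then poly_mapping.lookup P e else 0)"
    using kinj fS by (intro sum.cong) (auto dest: inj_onD)
  also have "\<dots> = poly_mapping.lookup P f" using fS by (simp add: S_def)
  finally have "poly_mapping.lookup P f = 0" using \<open>q = 0\<close> by simp
  then show False using f by (simp add: in_keys_iff)
qed


lemma degphi_exp:
  assumes "Poly_Mapping.keys e \<subseteq> Inl ` {0..n} \<union> range Inr"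
  shows "degphi a \<phi> e = (\<Sum>j\<in>{0..n}. a j * int (poly_mapping.lookup e (Inl j))) + int (poly_mapping.lookup e (Inr \<phi>))"
proof -
  define g where "g v = (case v of Inl j \<Rightarrow> a j | Inr \<psi> \<Rightarrow> (if \<psi> = \<phi> then 1 else 0)) * int (poly_mapping.lookup e v)" for v
  define K where "K = Poly_Mapping.keys e \<union> Inl ` {0..n} \<union> {Inr \<phi>}"
  have fK: "finite K" unfolding K_def by simp
  have "degphi a \<phi> e = sum g (Poly_Mapping.keys e)" unfolding degphi_def g_def by simp
  also have "\<dots> = sum g K"
    by (rule sum.mono_neutral_left[OF fK]) (auto simp: K_def g_def in_keys_iff)
  also have "\<dots> = sum g (insert (Inr \<phi>) (Inl ` {0..n}))"
    apply (rule sum.mono_neutral_right[OF fK])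
    using assms by (auto simp: K_def g_def in_keys_iff split: sum.splits)
  also have "\<dots> = g (Inr \<phi>) + sum g (Inl ` {0..n})" by (subst sum.insert) auto
  also have "sum g (Inl ` {0..n}) = (\<Sum>j\<in>{0..n}. g (Inl j))" by (subst sum.reindex) (auto simp: inj_on_def)
  finally show ?thesis by (simp add: g_def)
qed

lemma deg0_exp:
  assumes "Poly_Mapping.keys e \<subseteq> Inl ` {0..n} \<union> range Inr"
  shows "deg0 w e = (\<Sum>j\<in>{0..n}. int (w j) * int (poly_mapping.lookup e (Inl j)))"
proof -
  define g where "g v = (case v of Inl j \<Rightarrow> int (w j) | Inr _ \<Rightarrow> 0) * int (poly_mapping.lookup e v)" for v
  define K where "K = Poly_Mapping.keys e \<union> Inl ` {0..n}"
  have fK: "finite K" unfolding K_def by simp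
  have "deg0 w e = sum g (Poly_Mapping.keys e)" unfolding deg0_def g_def by simp
  also have "\<dots> = sum g K"
    by (rule sum.mono_neutral_left[OF fK]) (auto simp: K_def g_def in_keys_iff)
  also have "\<dots> = sum g (Inl ` {0..n})"
    apply (rule sum.mono_neutral_right[OF fK])
    using assms by (auto simp: K_def g_def in_keys_iff split: sum.splits)
  also have "sum g (Inl ` {0..n}) = (\<Sum>j\<in>{0..n}. g (Inl j))" by (subst sum.reindex) (auto simp: inj_on_def)
  finally show ?thesis by (simp add: g_def)
qed

lemma wdeg_exp:
  assumes "Poly_Mapping.keys f \<subseteq> {0..n}"
  shows "wdeg w f = (\<Sum>j\<in>{0..n}. w j * poly_mapping.lookup f j)"
  unfolding wdeg_def
  by (rule sum.mono_neutral_left) (use assms in \<open>auto simp: in_keys_iff\<close>)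

lemma xpart_lookup: "poly_mapping.lookup (xpart e) j = poly_mapping.lookup e (Inl j)"
proof -
  have "finite {j. poly_mapping.lookup e (Inl j) \<noteq> 0}"
  proof -
    have "{j. poly_mapping.lookup e (Inl j) \<noteq> 0} \<subseteq> Inl -` Poly_Mapping.keys e" by (auto simp: in_keys_iff)
    moreover have "finite (Inl -` Poly_Mapping.keys e)" by (rule finite_vimageI) (auto simp: inj_on_def)
    ultimately show ?thesis by (rule finite_subset)
  qed
  then show ?thesis unfolding xpart_def by simp
qed

lemma subst_lookup:
  "poly_mapping.lookup (subst_y1 G) f = (\<Sum>e\<in>{e \<in> Poly_Mapping.keys G. xpart e = f}. poly_mapping.lookup G e)"
proof -
  have "{f. (\<Sum>e\<in>{e \<in> Poly_Mapping.keys G. xpart e = f}. poly_mapping.lookup G e) \<noteq> 0} \<subseteq> xpart ` Poly_Mapping.keys G"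
  proof
    fix f assume "f \<in> {f. (\<Sum>e\<in>{e \<in> Poly_Mapping.keys G. xpart e = f}. poly_mapping.lookup G e) \<noteq> 0}"
    then have "{e \<in> Poly_Mapping.keys G. xpart e = f} \<noteq> {}" by (intro notI) simp
    then show "f \<in> xpart ` Poly_Mapping.keys G" by auto
  qed
  then have "finite {f. (\<Sum>e\<in>{e \<in> Poly_Mapping.keys G. xpart e = f}. poly_mapping.lookup G e) \<noteq> 0}"
    by (rule finite_subset) simp
  then show ?thesis unfolding subst_y1_def by simp
qed


lemma generic_lift:
  fixes \<Phi> :: "(rat \<times> nat set) set" and a :: "rat \<times> nat set \<Rightarrow> nat \<Rightarrow> int"
    and bb :: "rat \<times> nat set \<Rightarrow> int" and P :: "nat cpoly" and B :: nat
  assumes fin: "finite \<Phi>" and Pv: "pvars P \<subseteq> {0..n}" and Pd: "\<forall>f\<in>Poly_Mapping.keys P. wdeg w f = B"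
    and nn: "\<forall>\<phi>\<in>\<Phi>. \<forall>f\<in>Poly_Mapping.keys P. (\<Sum>j\<in>{0..n}. a \<phi> j * int (poly_mapping.lookup f j)) \<le> bb \<phi>"
  shows "\<exists>!G. pvars G \<subseteq> Inl ` {0..n} \<union> Inr ` \<Phi> \<and>
     (\<forall>e\<in>Poly_Mapping.keys G. deg0 w e = int B \<and> (\<forall>\<phi>\<in>\<Phi>. degphi (a \<phi>) \<phi> e = bb \<phi>)) \<and>
     subst_y1 G = P"
proof -
  define c where "c \<phi> f = bb \<phi> - (\<Sum>j\<in>{0..n}. a \<phi> j * int (poly_mapping.lookup f j))" for \<phi> f
  define h where "h f v = (case v of Inl j \<Rightarrow> poly_mapping.lookup f j | Inr \<phi> \<Rightarrow> if \<phi> \<in> \<Phi> then nat (c \<phi> f) else 0)" for f v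
  define mk where "mk f = Abs_poly_mapping (h f)" for f
  have mk_l: "poly_mapping.lookup (mk f) v = h f v" for f v
  proof -
    have "{v. h f v \<noteq> 0} \<subseteq> Inl ` Poly_Mapping.keys f \<union> Inr ` \<Phi>"
    proof
      fix v assume "v \<in> {v. h f v \<noteq> 0}"
      then show "v \<in> Inl ` Poly_Mapping.keys f \<union> Inr ` \<Phi>"
        by (cases v) (auto simp: h_def in_keys_iff split: if_splits)
    qed
    then have "finite {v. h f v \<noteq> 0}" by (rule finite_subset) (use fin in simp)
    then show ?thesis unfolding mk_def by simp
  qed
  have xmk: "xpart (mk f) = f" for f
    by (rule poly_mapping_eqI) (simp add: xpart_lookup mk_l h_def)
  have keys_mk: "Poly_Mapping.keys (mk f) \<subseteq> Inl ` {0..n} \<union> Inr ` \<Phi>" if "Poly_Mapping.keys f \<subseteq> {0..n}" for f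
  proof
    fix v assume v: "v \<in> Poly_Mapping.keys (mk f)"
    show "v \<in> Inl ` {0..n} \<union> Inr ` \<Phi>"
    proof (cases v)
      case (Inl j)
      then have "j \<in> Poly_Mapping.keys f" using v by (simp add: in_keys_iff mk_l h_def)
      then show ?thesis using that Inl by auto
    next
      case (Inr \<phi>) then show ?thesis using v by (auto simp: in_keys_iff mk_l h_def split: if_splits)
    qed
  qed
  let ?Q = "\<lambda>G. pvars G \<subseteq> Inl ` {0..n} \<union> Inr ` \<Phi> \<and>
     (\<forall>e\<in>Poly_Mapping.keys G. deg0 w e = int B \<and> (\<forall>\<phi>\<in>\<Phi>. degphi (a \<phi>) \<phi> e = bb \<phi>)) \<and>
     subst_y1 G = P"
  have char: "e = mk (xpart e)" if Q: "?Q G" and e: "e \<in> Poly_Mapping.keys G" for G e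
  proof (rule poly_mapping_eqI)
    fix v
    have ke: "Poly_Mapping.keys e \<subseteq> Inl ` {0..n} \<union> Inr ` \<Phi>" using Q e unfolding pvars_def by blast
    show "poly_mapping.lookup e v = poly_mapping.lookup (mk (xpart e)) v"
    proof (cases v)
      case (Inl j) then show ?thesis by (simp add: mk_l h_def xpart_lookup)
    next
      case (Inr \<phi>)
      show ?thesis
      proof (cases "\<phi> \<in> \<Phi>")
        case True
        have "degphi (a \<phi>) \<phi> e = bb \<phi>" using Q e True by blast
        moreover have "degphi (a \<phi>) \<phi> e = (\<Sum>j\<in>{0..n}. a \<phi> j * int (poly_mapping.lookup e (Inl j))) + int (poly_mapping.lookup e (Inr \<phi>))"
          by (rule degphi_exp) (use ke in auto)
        ultimately have "int (poly_mapping.lookup e (Inr \<phi>)) = c \<phi> (xpart e)"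
          by (simp add: c_def xpart_lookup)
        then show ?thesis using Inr True by (simp add: mk_l h_def)
      next
        case False
        then have "v \<notin> Poly_Mapping.keys e" using ke Inr by auto
        then show ?thesis using Inr False by (simp add: mk_l h_def in_keys_iff)
      qed
    qed
  qed
  define g0 where "g0 e = (if e = mk (xpart e) then poly_mapping.lookup P (xpart e) else 0)" for e
  define G0 where "G0 = Abs_poly_mapping g0"
  have G0_l: "poly_mapping.lookup G0 e = g0 e" for e
  proof -
    have "{e. g0 e \<noteq> 0} \<subseteq> mk ` Poly_Mapping.keys P"
    proof
      fix e assume "e \<in> {e. g0 e \<noteq> 0}"
      then have g: "g0 e \<noteq> 0" by simp
      have em: "e = mk (xpart e)"
      proof (rule ccontr)
        assume "\<not> e = mk (xpart e)"
        then have "g0 e = 0" unfolding g0_def by (rule if_not_P)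
        then show False using g by contradiction
      qed
      then have "g0 e = poly_mapping.lookup P (xpart e)" unfolding g0_def by (rule if_P)
      then have "xpart e \<in> Poly_Mapping.keys P" using g by (simp add: in_keys_iff)
      then show "e \<in> mk ` Poly_Mapping.keys P" using em by (metis image_eqI)
    qed
    then have "finite {e. g0 e \<noteq> 0}" by (rule finite_subset) simp
    then show ?thesis unfolding G0_def by simp
  qed
  have kG0: "xpart e \<in> Poly_Mapping.keys P \<and> e = mk (xpart e)" if "e \<in> Poly_Mapping.keys G0" for e
  proof -
    have g: "g0 e \<noteq> 0" using that by (simp add: in_keys_iff G0_l)
    have em: "e = mk (xpart e)"
    proof (rule ccontr)
      assume "\<not> e = mk (xpart e)"
      then have "g0 e = 0" unfolding g0_def by (rule if_not_P)
      then show False using g by contradiction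
    qed
    then have "g0 e = poly_mapping.lookup P (xpart e)" unfolding g0_def by (rule if_P)
    then have "xpart e \<in> Poly_Mapping.keys P" using g by (simp add: in_keys_iff)
    then show ?thesis using em by blast
  qed
  have kG0': "\<exists>f\<in>Poly_Mapping.keys P. e = mk f" if "e \<in> Poly_Mapping.keys G0" for e
    using kG0[OF that] by blast
  have kP: "Poly_Mapping.keys f \<subseteq> {0..n}" if "f \<in> Poly_Mapping.keys P" for f
    using that Pv unfolding pvars_def by blast
  have QG0: "?Q G0"
  proof (intro conjI ballI)
    show "pvars G0 \<subseteq> Inl ` {0..n} \<union> Inr ` \<Phi>"
    proof
      fix v assume "v \<in> pvars G0"
      then obtain e where e: "e \<in> Poly_Mapping.keys G0" "v \<in> Poly_Mapping.keys e" unfolding pvars_def by blast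
      obtain f where f: "f \<in> Poly_Mapping.keys P" "e = mk f" using kG0'[OF e(1)] by blast
      show "v \<in> Inl ` {0..n} \<union> Inr ` \<Phi>" using keys_mk[OF kP[OF f(1)]] e(2) f(2) by blast
    qed
  next
    fix e assume e: "e \<in> Poly_Mapping.keys G0"
    obtain f where f: "f \<in> Poly_Mapping.keys P" "e = mk f" using kG0'[OF e] by blast
    have ke: "Poly_Mapping.keys e \<subseteq> Inl ` {0..n} \<union> range Inr" using keys_mk[OF kP[OF f(1)]] f(2) by auto
    have "deg0 w e = (\<Sum>j\<in>{0..n}. int (w j) * int (poly_mapping.lookup e (Inl j)))" by (rule deg0_exp[OF ke])
    also have "\<dots> = int (\<Sum>j\<in>{0..n}. w j * poly_mapping.lookup f j)" using f(2) by (simp add: mk_l h_def)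
    also have "\<dots> = int B" using wdeg_exp[OF kP[OF f(1)], of w] Pd f(1) by simp
    finally show "deg0 w e = int B" .
    fix \<phi> assume ph: "\<phi> \<in> \<Phi>"
    have "degphi (a \<phi>) \<phi> e = (\<Sum>j\<in>{0..n}. a \<phi> j * int (poly_mapping.lookup e (Inl j))) + int (poly_mapping.lookup e (Inr \<phi>))"
      by (rule degphi_exp[OF ke])
    also have "\<dots> = (\<Sum>j\<in>{0..n}. a \<phi> j * int (poly_mapping.lookup f j)) + int (nat (c \<phi> f))"
      using f(2) ph by (simp add: mk_l h_def)
    also have "\<dots> = bb \<phi>" using nn ph f(1) by (simp add: c_def)
    finally show "degphi (a \<phi>) \<phi> e = bb \<phi>" .
  next
    show "subst_y1 G0 = P"
    proof (rule poly_mapping_eqI)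
      fix f
      show "poly_mapping.lookup (subst_y1 G0) f = poly_mapping.lookup P f"
      proof (cases "f \<in> Poly_Mapping.keys P")
        case True
        have "{e \<in> Poly_Mapping.keys G0. xpart e = f} = {mk f}"
        proof -
          have "mk f \<in> Poly_Mapping.keys G0" using True by (simp add: in_keys_iff G0_l g0_def xmk)
          moreover have "e = mk f" if "e \<in> Poly_Mapping.keys G0" "xpart e = f" for e
            using kG0'[OF that(1)] that(2) xmk by metis
          ultimately show ?thesis using xmk[of f] by blast
        qed
        then show ?thesis by (simp add: subst_lookup G0_l g0_def xmk)
      next
        case False
        have "{e \<in> Poly_Mapping.keys G0. xpart e = f} = {}"
        proof (intro equalityI subsetI)
          fix e assume "e \<in> {e \<in> Poly_Mapping.keys G0. xpart e = f}"
          then have "e \<in> Poly_Mapping.keys G0" "xpart e = f" by auto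
          then show "e \<in> {}" using kG0 False by metis
        qed simp
        then have "poly_mapping.lookup (subst_y1 G0) f = 0" by (simp only: subst_lookup sum.empty)
        then show ?thesis using False by (simp add: in_keys_iff)
      qed
    qed
  qed
  have uniq: "G = G0" if Q: "?Q G" for G
  proof (rule poly_mapping_eqI)
    fix e
    have sP: "poly_mapping.lookup P f = (\<Sum>e\<in>{e \<in> Poly_Mapping.keys G. xpart e = f}. poly_mapping.lookup G e)" for f
      using Q subst_lookup by metis
    show "poly_mapping.lookup G e = poly_mapping.lookup G0 e"
    proof (cases "e \<in> Poly_Mapping.keys G")
      case True
      have em: "e = mk (xpart e)" using char[OF Q True] .
      have "{e' \<in> Poly_Mapping.keys G. xpart e' = xpart e} = {e}"
      proof (intro equalityI subsetI)
        fix e' assume "e' \<in> {e' \<in> Poly_Mapping.keys G. xpart e' = xpart e}"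
        then have "e' \<in> Poly_Mapping.keys G" "xpart e' = xpart e" by auto
        then have "e' = mk (xpart e)" using char[OF Q] by metis
        then show "e' \<in> {e}" using em by (metis singletonI)
      qed (use True in simp)
      then have "poly_mapping.lookup P (xpart e) = poly_mapping.lookup G e" using sP[of "xpart e"] by simp
      then show ?thesis unfolding G0_l g0_def by (subst if_P[OF em]) simp
    next
      case False
      have emp: "{e' \<in> Poly_Mapping.keys G. xpart e' = xpart e} = {}" if em: "e = mk (xpart e)"
      proof (intro equalityI subsetI)
        fix e' assume "e' \<in> {e' \<in> Poly_Mapping.keys G. xpart e' = xpart e}"
        then have "e' \<in> Poly_Mapping.keys G" "xpart e' = xpart e" by auto
        then have "e' = e" using char[OF Q] em by metis
        then show "e' \<in> {}" using False \<open>e' \<in> Poly_Mapping.keys G\<close> by simp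
      qed simp
      have z: "poly_mapping.lookup G e = 0" using False by (simp add: in_keys_iff)
      show ?thesis
      proof (cases "e = mk (xpart e)")
        case True
        have "g0 e = poly_mapping.lookup P (xpart e)" unfolding g0_def by (rule if_P[OF True])
        also have "\<dots> = 0" using sP[of "xpart e"] emp[OF True] by simp
        finally show ?thesis using z by (simp add: G0_l)
      next
        case False
        have "g0 e = 0" unfolding g0_def by (rule if_not_P[OF False])
        then show ?thesis using z by (simp add: G0_l)
      qed
    qed
  qed
  show ?thesis using QG0 uniq by blast
qed


lemma dim_Csec:
  assumes "dimX_eq n w F \<alpha> d"
  shows "\<exists>i\<in>{0..n}. \<alpha> * of_nat (w i) \<in> \<int>"
proof -
  let ?A = "insert (\<lambda>_. 0) (Xsec n w F \<alpha>)"
  obtain Z where Z: "\<forall>i\<le>Suc d. zirred n (Z i) \<and> Z i \<subseteq> ?A" "\<forall>i<Suc d. Z i \<subset> Z (Suc i)"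
    using assms unfolding dimX_eq_def aff_dim_eq_def has_chain_def by blast
  have "Z 0 \<noteq> {}" using Z(1) unfolding zirred_def by auto
  then obtain y where y: "y \<in> Z 0" by blast
  obtain z where z: "z \<in> Z 1" "z \<notin> Z 0" using Z(2) by auto
  have "Z 0 \<subseteq> ?A" "Z 1 \<subseteq> ?A" using Z(1) by auto
  then have yz: "y \<in> ?A" "z \<in> ?A" "y \<noteq> z" using y z by auto
  have "\<exists>x. x \<in> Xsec n w F \<alpha>"
  proof (cases "y = (\<lambda>_. 0)")
    case True then have "z \<in> Xsec n w F \<alpha>" using yz by auto
    then show ?thesis by blast
  next
    case False then have "y \<in> Xsec n w F \<alpha>" using yz by auto
    then show ?thesis by blast
  qed
  then obtain x where x: "x \<in> Xsec n w F \<alpha>" by blast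
  then obtain j where j: "x j \<noteq> 0" unfolding Xsec_def Xcone_def by blast
  have "j \<le> n"
  proof (rule ccontr)
    assume "\<not> j \<le> n"
    then have "x j = 0" using x unfolding Xsec_def Xcone_def cspace_def by auto
    then show False using j by simp
  qed
  moreover have "j \<in> Csec n w \<alpha>"
  proof (rule ccontr)
    assume "j \<notin> Csec n w \<alpha>"
    then have "x j = 0" using x \<open>j \<le> n\<close> unfolding Xsec_def by auto
    then show False using j by simp
  qed
  ultimately show ?thesis unfolding Csec_def by auto
qed

lemma alpha_finite:
  fixes n :: nat and w :: "nat \<Rightarrow> nat"
  assumes w_pos: "\<forall>i\<in>{0..n}. 0 < w i"
  shows "finite {\<alpha>::rat. 0 < \<alpha> \<and> \<alpha> < 1 \<and> (\<exists>i\<in>{0..n}. \<alpha> * of_nat (w i) \<in> \<int>)}"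
proof -
  have "{\<alpha>::rat. 0 < \<alpha> \<and> \<alpha> < 1 \<and> (\<exists>i\<in>{0..n}. \<alpha> * of_nat (w i) \<in> \<int>)} \<subseteq>
     (\<Union>i\<in>{0..n}. (\<lambda>m. of_int m / of_nat (w i)) ` {0..int (w i)})"
  proof
    fix \<alpha> :: rat assume "\<alpha> \<in> {\<alpha>::rat. 0 < \<alpha> \<and> \<alpha> < 1 \<and> (\<exists>i\<in>{0..n}. \<alpha> * of_nat (w i) \<in> \<int>)}"
    then obtain i where a: "0 < \<alpha>" "\<alpha> < 1" "i \<in> {0..n}" "\<alpha> * of_nat (w i) \<in> \<int>" by blast
    then obtain m where m: "\<alpha> * of_nat (w i) = of_int m" by (auto elim: Ints_cases)
    have wp: "(0::rat) < of_nat (w i)" using w_pos a(3) by simp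
    have "\<alpha> = of_int m / of_nat (w i)" using m wp by (simp add: field_simps)
    moreover have "0 \<le> m"
    proof -
      have "(0::rat) \<le> \<alpha> * of_nat (w i)" using a wp by simp
      then have "(0::rat) \<le> of_int m" using m by simp
      then show ?thesis by simp
    qed
    moreover have "m \<le> int (w i)"
    proof -
      have "\<alpha> * of_nat (w i) \<le> 1 * of_nat (w i)" using a wp by (intro mult_right_mono) auto
      then have "(of_int m::rat) \<le> of_int (int (w i))" using m by simp
      then show ?thesis by (simp only: of_int_le_iff)
    qed
    ultimately have "\<alpha> \<in> (\<lambda>m. of_int m / of_nat (w i)) ` {0..int (w i)}" by auto
    then show "\<alpha> \<in> (\<Union>i\<in>{0..n}. (\<lambda>m. of_int m / of_nat (w i)) ` {0..int (w i)})" using a(3) by blast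
  qed
  moreover have "finite (\<Union>i\<in>{0..n}. (\<lambda>m. of_int m / of_nat (w i) :: rat) ` {0..int (w i)})"
    by (rule finite_UN_I) (simp, rule finite_imageI, simp)
  ultimately show ?thesis by (rule finite_subset)
qed

lemma Phi_finite:
  assumes w_pos: "\<forall>i\<in>{0..n}. 0 < w i"
  shows "finite (Phi n w b F)"
proof -
  have "Phi n w b F \<subseteq> {\<alpha>::rat. 0 < \<alpha> \<and> \<alpha> < 1 \<and> (\<exists>i\<in>{0..n}. \<alpha> * of_nat (w i) \<in> \<int>)} \<times> Pow {0..n}"
  proof
    fix p assume p: "p \<in> Phi n w b F"
    obtain \<alpha> \<Lambda> where pe: "p = (\<alpha>, \<Lambda>)" by (cases p)
    have "(type1 n w b F \<alpha> \<and> \<Lambda> = {}) \<or> (type2 n w b F \<alpha> \<and> \<Lambda> \<subseteq> Csec n w \<alpha>)"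
      using p pe unfolding Phi_def by auto
    then show "p \<in> {\<alpha>::rat. 0 < \<alpha> \<and> \<alpha> < 1 \<and> (\<exists>i\<in>{0..n}. \<alpha> * of_nat (w i) \<in> \<int>)} \<times> Pow {0..n}"
    proof
      assume "type1 n w b F \<alpha> \<and> \<Lambda> = {}"
      then show ?thesis using pe dim_Csec[of n w F \<alpha> 1] unfolding type1_def by auto
    next
      assume "type2 n w b F \<alpha> \<and> \<Lambda> \<subseteq> Csec n w \<alpha>"
      then show ?thesis using pe dim_Csec[of n w F \<alpha> 0] unfolding type2_def Csec_def by auto
    qed
  qed
  moreover have "finite ({\<alpha>::rat. 0 < \<alpha> \<and> \<alpha> < 1 \<and> (\<exists>i\<in>{0..n}. \<alpha> * of_nat (w i) \<in> \<int>)} \<times> Pow {0..n})"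
    using alpha_finite[OF w_pos] by simp
  ultimately show ?thesis by (rule finite_subset)
qed


lemma floor_sum_le:
  fixes \<alpha> :: rat and f :: "nat \<Rightarrow> nat" and w :: "nat \<Rightarrow> nat"
  assumes "(\<Sum>j\<in>{0..n}. w j * f j) = B"
  shows "(\<Sum>j\<in>{0..n}. \<lfloor>\<alpha> * of_nat (w j)\<rfloor> * int (f j)) \<le> \<lfloor>\<alpha> * of_nat B\<rfloor>"
proof -
  have "(of_int (\<Sum>j\<in>{0..n}. \<lfloor>\<alpha> * of_nat (w j)\<rfloor> * int (f j)) :: rat) =
        (\<Sum>j\<in>{0..n}. of_int \<lfloor>\<alpha> * of_nat (w j)\<rfloor> * of_nat (f j))" by simp
  also have "\<dots> \<le> (\<Sum>j\<in>{0..n}. \<alpha> * of_nat (w j) * of_nat (f j))"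
    by (intro sum_mono mult_right_mono) auto
  also have "\<dots> = \<alpha> * of_nat B" using assms[symmetric] by (simp add: sum_distrib_left mult.assoc)
  finally show ?thesis by (simp add: le_floor_iff)
qed

lemma nonneg:
  fixes n :: nat and w b :: "nat \<Rightarrow> nat" and F :: "nat \<Rightarrow> nat cpoly"
  assumes qh: "quasi_hom n w (b k) (F k)"
    and ph: "\<phi> \<in> Phi n w b F" and f: "f \<in> Poly_Mapping.keys (F k)"
  shows "(\<Sum>j\<in>{0..n}. acoef n w b F \<phi> j * int (poly_mapping.lookup f j)) \<le> bcoef n w b F \<phi> k"
proof -
  obtain \<alpha> \<Lambda> where pe: "\<phi> = (\<alpha>, \<Lambda>)" by (cases \<phi>)
  have kf: "Poly_Mapping.keys f \<subseteq> {0..n}" using qh f unfolding quasi_hom_def pvars_def by blast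
  have B: "(\<Sum>j\<in>{0..n}. w j * poly_mapping.lookup f j) = b k"
    using wdeg_exp[OF kf, of w] qh f unfolding quasi_hom_def by simp
  have fl: "(\<Sum>j\<in>{0..n}. \<lfloor>\<alpha> * of_nat (w j)\<rfloor> * int (poly_mapping.lookup f j)) \<le> \<lfloor>\<alpha> * of_nat (b k)\<rfloor>"
    by (rule floor_sum_le[OF B])
  show ?thesis
  proof (cases "type1 n w b F \<alpha>")
    case True
    then show ?thesis using fl pe by (simp add: acoef_def bcoef_def)
  next
    case nt: False
    then have t2: "type2 n w b F \<alpha>" "\<Lambda> \<subseteq> Csec n w \<alpha>" "Uset n w \<alpha> \<Lambda> \<inter> Xsec n w F \<alpha> \<noteq> {}"
      using ph pe unfolding Phi_def by auto
    have ac: "acoef n w b F \<phi> j = \<lfloor>\<alpha> * of_nat (w j)\<rfloor> - (if j \<in> \<Lambda> then 1 else 0)" for j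
      using nt pe by (simp add: acoef_def)
    have le1: "(\<Sum>j\<in>{0..n}. acoef n w b F \<phi> j * int (poly_mapping.lookup f j)) \<le>
        (\<Sum>j\<in>{0..n}. \<lfloor>\<alpha> * of_nat (w j)\<rfloor> * int (poly_mapping.lookup f j))"
      by (intro sum_mono mult_right_mono) (auto simp: ac)
    show ?thesis
    proof (cases "k \<in> Gam n w b F \<alpha> \<Lambda>")
      case False
      then show ?thesis using le1 fl nt pe by (simp add: bcoef_def)
    next
      case True
      have bc: "bcoef n w b F \<phi> k = \<lfloor>\<alpha> * of_nat (b k)\<rfloor> - 1" using True nt pe by (simp add: bcoef_def)
      have bint: "\<alpha> * of_nat (b k) \<in> \<int>" and van: "\<forall>x\<in>Uset n w \<alpha> \<Lambda>. peval (F k) x = 0"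
        using True unfolding Gam_def by auto
      define T where "T = Csec n w \<alpha> - \<Lambda>"
      have Tn: "T \<subseteq> {0..n}" unfolding T_def Csec_def by auto
      show ?thesis
      proof (cases "Poly_Mapping.keys f \<subseteq> T")
        case True
        have "False"
        proof (rule torus[OF Tn f True], intro allI impI)
          fix x :: "nat \<Rightarrow> complex" assume x: "(\<forall>j\<in>T. x j \<noteq> 0) \<and> (\<forall>j. j \<notin> T \<longrightarrow> x j = 0)"
          obtain y where y: "y \<in> Uset n w \<alpha> \<Lambda>" using t2(3) by blast
          then obtain j where j: "y j \<noteq> 0" unfolding Uset_def by blast
          have "j \<in> T"
          proof (rule ccontr)
            assume jT: "j \<notin> T"
            have "y \<in> cspace n" using y unfolding Uset_def by blast
            then have "j \<le> n" using j unfolding cspace_def by (auto simp: not_le[symmetric])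
            then show False using jT y j unfolding Uset_def T_def by auto
          qed
          have "x \<in> Uset n w \<alpha> \<Lambda>"
            unfolding Uset_def cspace_def
          proof (intro CollectI conjI ballI allI impI)
            fix i :: nat assume "n < i" then show "x i = 0" using x Tn by auto
          next
            show "\<exists>j. x j \<noteq> 0" using x \<open>j \<in> T\<close> by blast
          next
            fix i assume "i \<in> {0..n} - Csec n w \<alpha>" then show "x i = 0" using x unfolding T_def by auto
          next
            fix i assume "i \<in> \<Lambda>" then show "x i = 0" using x unfolding T_def by auto
          next
            fix i assume "i \<in> Csec n w \<alpha> - \<Lambda>" then show "x i \<noteq> 0" using x unfolding T_def by auto
          qed
          then show "peval (F k) x = 0" using van by blast
        qed
        then show ?thesis by simp
      next
        case False
        then obtain j where j: "j \<in> Poly_Mapping.keys f" "j \<notin> T" by blast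
        have jn: "j \<in> {0..n}" using j kf by blast
        have fj: "0 < poly_mapping.lookup f j" using j by (simp add: in_keys_iff)
        have termle: "of_int (acoef n w b F \<phi> i) \<le> \<alpha> * of_nat (w i)" for i
        proof -
          have "acoef n w b F \<phi> i \<le> \<lfloor>\<alpha> * of_nat (w i)\<rfloor>" by (simp add: ac)
          then have "(of_int (acoef n w b F \<phi> i) :: rat) \<le> of_int \<lfloor>\<alpha> * of_nat (w i)\<rfloor>" by (simp only: of_int_le_iff)
          then show ?thesis using of_int_floor_le[of "\<alpha> * of_nat (w i)"] by linarith
        qed
        have termlt: "of_int (acoef n w b F \<phi> j) < \<alpha> * of_nat (w j)"
        proof (cases "j \<in> \<Lambda>")
          case True
          have "of_int (acoef n w b F \<phi> j) = of_int \<lfloor>\<alpha> * of_nat (w j)\<rfloor> - (1::rat)" using True by (simp add: ac)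
          also have "\<dots> < \<alpha> * of_nat (w j)" using of_int_floor_le[of "\<alpha> * of_nat (w j)"] by linarith
          finally show ?thesis .
        next
          case False
          then have "j \<notin> Csec n w \<alpha>" using j(2) unfolding T_def by auto
          then have ni: "\<alpha> * of_nat (w j) \<notin> \<int>" using jn unfolding Csec_def by auto
          have "of_int \<lfloor>\<alpha> * of_nat (w j)\<rfloor> \<noteq> \<alpha> * of_nat (w j)"
          proof
            assume "of_int \<lfloor>\<alpha> * of_nat (w j)\<rfloor> = \<alpha> * of_nat (w j)"
            then have "\<alpha> * of_nat (w j) \<in> \<int>" using Ints_of_int[where 'a=rat, of "\<lfloor>\<alpha> * of_nat (w j)\<rfloor>"] by (simp only:)
            then show False using ni by contradiction
          qed
          then have "of_int \<lfloor>\<alpha> * of_nat (w j)\<rfloor> < \<alpha> * of_nat (w j)"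
            using of_int_floor_le[of "\<alpha> * of_nat (w j)"] by linarith
          then show ?thesis using False by (simp add: ac)
        qed
        have "(of_int (\<Sum>j\<in>{0..n}. acoef n w b F \<phi> j * int (poly_mapping.lookup f j)) :: rat) =
            (\<Sum>i\<in>{0..n}. of_int (acoef n w b F \<phi> i) * of_nat (poly_mapping.lookup f i))" by simp
        also have "\<dots> < (\<Sum>i\<in>{0..n}. \<alpha> * of_nat (w i) * of_nat (poly_mapping.lookup f i))"
        proof (rule sum_strict_mono_ex1)
          show "finite {0..n}" by simp
          show "\<forall>i\<in>{0..n}. of_int (acoef n w b F \<phi> i) * of_nat (poly_mapping.lookup f i) \<le> \<alpha> * of_nat (w i) * of_nat (poly_mapping.lookup f i)"
            using termle by (auto intro: mult_right_mono)
          show "\<exists>i\<in>{0..n}. of_int (acoef n w b F \<phi> i) * of_nat (poly_mapping.lookup f i) < \<alpha> * of_nat (w i) * of_nat (poly_mapping.lookup f i)"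
            using jn termlt fj by (intro bexI[of _ j]) (auto intro: mult_strict_right_mono)
        qed
        also have "\<dots> = \<alpha> * of_nat (b k)" using B[symmetric] by (simp add: sum_distrib_left mult.assoc)
        also have "\<dots> = of_int \<lfloor>\<alpha> * of_nat (b k)\<rfloor>"
        proof -
          obtain m where m: "\<alpha> * of_nat (b k) = of_int m" using bint by (elim Ints_cases) simp
          show ?thesis unfolding m by simp
        qed
        finally have "(\<Sum>j\<in>{0..n}. acoef n w b F \<phi> j * int (poly_mapping.lookup f j)) < \<lfloor>\<alpha> * of_nat (b k)\<rfloor>"
          by (simp only: of_int_less_iff)
        then show ?thesis using bc by simp
      qed
    qed
  qed
qed


theorem lemma3p8:
  fixes n :: nat and w b :: "nat \<Rightarrow> nat" and F :: "nat \<Rightarrow> nat cpoly"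
  assumes w_pos: "\<forall>i\<in>{0..n}. 0 < w i"
    and w_gcd: "Gcd (w ` {0..n}) = 1"
    and F_qh: "\<forall>k\<in>{1..n-3}. quasi_hom n w (b k) (F k)"
    and CY: "(\<Sum>k\<in>{1..n-3}. b k) = (\<Sum>i\<in>{0..n}. w i)"
    and smooth: "quasi_smooth n F"
    and nonlinear: "\<forall>k\<in>{1..n-3}. \<forall>i\<in>{0..n}. b k \<noteq> w i"
  shows "\<forall>k\<in>{1..n-3}. \<exists>!G. is_lift n w b F k G"
proof
  fix k assume k: "k \<in> {1..n-3}"
  have qh: "quasi_hom n w (b k) (F k)" using F_qh k by blast
  have Pv: "pvars (F k) \<subseteq> {0..n}" using qh unfolding quasi_hom_def by blast
  have Pd: "\<forall>f\<in>Poly_Mapping.keys (F k). wdeg w f = b k" using qh unfolding quasi_hom_def by blast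
  have nn: "\<forall>\<phi>\<in>Phi n w b F. \<forall>f\<in>Poly_Mapping.keys (F k).
      (\<Sum>j\<in>{0..n}. acoef n w b F \<phi> j * int (poly_mapping.lookup f j)) \<le> bcoef n w b F \<phi> k"
    using nonneg[of n w b k F, OF qh] by blast
  show "\<exists>!G. is_lift n w b F k G"
    unfolding is_lift_def
    using generic_lift[OF Phi_finite[OF w_pos] Pv Pd, where a = "acoef n w b F" and bb = "\<lambda>\<phi>. bcoef n w b F \<phi> k"] nn
    by simp
qed

end
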